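(* Let $\varphi:[-1,1]\to[0,\infty)$ be a non-decreasing right-continuous function with $\varphi\equiv0$ on $[-1,0)$ and $\varphi$ constant on $[1/\sqrt5,1]$, and let $d\varphi$ be the non-negative Radon measure on $[-1,1]$ with $d\varphi([-1,t])=\varphi(t)$ for all $t\in[-1,1]$ (so $\mathrm{supp}(d\varphi)\subset[0,1/\sqrt5]$). Then \[ P_{\mathcal{A}_+}(\varphi)=A_\varphi+B_\varphi t+C_\varphi t^2, \] where \[ A_\varphi=\int_{[0,1/\sqrt5]}\tfrac18(4-9a+5a^3)\,d\varphi(a),\quad B_\varphi=\int_{[0,1/\sqrt5]}\tfrac34(1-a^2)\,d\varphi(a),\quad C_\varphi=\int_{[0,1/\sqrt5]}\tfrac{15}{8}(a-a^3)\,d\varphi(a). \]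
   Context: $\mathcal{A}_+=\{\sum_{n=0}^\infty a_nt^n : a_n\ge0,\ \text{the series converges in }L^2([-1,1])\}$ (real $L^2$ for Lebesgue measure, convergence of partial sums); it is a closed convex cone and $P_{\mathcal{A}_+}$ denotes the metric projection onto it (the unique nearest point). *)

theory Defs
  imports "HOL-Analysis.Analysis"
begin

definition in_L2 :: "(real \<Rightarrow> real) \<Rightarrow> bool" where
  "in_L2 f \<longleftrightarrow> set_borel_measurable lborel {-1..1} f \<and>
     set_integrable lborel {-1..1} (\<lambda>t. (f t)\<^sup>2)"

definition L2dist :: "(real \<Rightarrow> real) \<Rightarrow> (real \<Rightarrow> real) \<Rightarrow> real" where
  "L2dist f g = sqrt (LINT t:{-1..1}|lborel. (f t - g t)\<^sup>2)"

definition A_plus :: "(real \<Rightarrow> real) set" where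
  "A_plus = {f. in_L2 f \<and> (\<exists>a::nat \<Rightarrow> real. (\<forall>n. a n \<ge> 0) \<and>
      (\<lambda>N. L2dist f (\<lambda>t. \<Sum>n<N. a n * t ^ n)) \<longlonglongrightarrow> 0)}"

definition is_metric_projection ::
  "(real \<Rightarrow> real) set \<Rightarrow> (real \<Rightarrow> real) \<Rightarrow> (real \<Rightarrow> real) \<Rightarrow> bool" where
  "is_metric_projection K f g \<longleftrightarrow> g \<in> K \<and> (\<forall>h\<in>K. L2dist f g \<le> L2dist f h)"

end

theory Submission
  imports Defs
begin


lemma set_int_nonneg:
  fixes f :: "'a \<Rightarrow> real"
  shows "(\<And>x. x \<in> A \<Longrightarrow> 0 \<le> f x) \<Longrightarrow> 0 \<le> (LINT x:A|M. f x)"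
  unfolding set_lebesgue_integral_def
  by (intro integral_nonneg_AE AE_I2) (auto simp: indicator_def)

lemma L2_cont:
  assumes c: "continuous_on {-1..1} f"
  shows "in_L2 f"
  unfolding in_L2_def set_borel_measurable_def set_integrable_def
proof
  have "(\<lambda>x. indicator {-1..1::real} x *\<^sub>R f x) \<in> borel_measurable borel"
    by (rule borel_measurable_continuous_on_indicator) (auto intro: c)
  thus "(\<lambda>x. indicator {-1..1::real} x *\<^sub>R f x) \<in> borel_measurable lborel" by simp
  show "integrable lborel (\<lambda>x. indicator {-1..1::real} x *\<^sub>R (f x)\<^sup>2)"
    by (rule borel_integrable_compact) (auto intro!: continuous_intros c)
qed

lemma L2_bounded:
  assumes m: "set_borel_measurable lborel {-1..1} f" and b: "\<forall>t\<in>{-1..1}. \<bar>f t\<bar> \<le> B"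
  shows "in_L2 f"
  unfolding in_L2_def set_integrable_def
proof (intro conjI)
  show "set_borel_measurable lborel {-1..1} f" by (rule m)
  have i: "integrable lborel (\<lambda>t. indicator {-1..1::real} t *\<^sub>R B^2)"
    by (intro borel_integrable_compact continuous_intros) auto
  show "integrable lborel (\<lambda>x. indicator {-1..1} x *\<^sub>R (f x)\<^sup>2)"
  proof (rule Bochner_Integration.integrable_bound[OF i])
    have "(\<lambda>x. (indicator {-1..1} x *\<^sub>R f x)^2) \<in> borel_measurable lborel"
      using m unfolding set_borel_measurable_def by measurable
    moreover have "(\<lambda>x. (indicator {-1..1} x *\<^sub>R f x)^2) = (\<lambda>x. indicator {-1..1} x *\<^sub>R (f x)\<^sup>2 :: real)"
      by (auto simp: indicator_def)
    ultimately show "(\<lambda>x. indicator {-1..1} x *\<^sub>R (f x)\<^sup>2) \<in> borel_measurable lborel" by simp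
    show "AE x in lborel. norm (indicator {-1..1} x *\<^sub>R (f x)\<^sup>2) \<le> norm (indicator {-1..1::real} x *\<^sub>R B^2)"
    proof (intro AE_I2)
      fix x :: real
      show "norm (indicator {-1..1} x *\<^sub>R (f x)\<^sup>2) \<le> norm (indicator {-1..1::real} x *\<^sub>R B^2)"
      proof (cases "x \<in> {-1..1}")
        case True
        hence "\<bar>f x\<bar> \<le> B" using b by auto
        hence "\<bar>f x\<bar>^2 \<le> B^2"
          by (intro power_mono) auto
        hence "(f x)^2 \<le> B^2" by simp
        thus ?thesis using True by (simp add: indicator_def)
      next
        case False thus ?thesis by simp
      qed
    qed
  qed
qed

lemma L2_prod:
  assumes f: "in_L2 f" and g: "in_L2 g"
  shows "set_integrable lborel {-1..1} (\<lambda>t. f t * g t)"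
  unfolding set_integrable_def
proof (rule Bochner_Integration.integrable_bound)
  show "integrable lborel (\<lambda>t. indicator {-1..1::real} t *\<^sub>R ((f t)^2 + (g t)^2))"
    using f g unfolding in_L2_def by (intro set_integral_add(1)[unfolded set_integrable_def]) (auto simp: set_integrable_def)
  have "(\<lambda>x. (indicator {-1..1} x *\<^sub>R f x) * (indicator {-1..1} x *\<^sub>R g x)) \<in> borel_measurable lborel"
    using f g unfolding in_L2_def set_borel_measurable_def by (intro borel_measurable_times) simp_all
  moreover have "(\<lambda>x. (indicator {-1..1} x *\<^sub>R f x) * (indicator {-1..1} x *\<^sub>R g x)) = (\<lambda>x. indicator {-1..1} x *\<^sub>R (f x * g x) :: real)"
    by (auto simp: indicator_def)
  ultimately show "(\<lambda>x. indicator {-1..1} x *\<^sub>R (f x * g x)) \<in> borel_measurable lborel" by simp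
  show "AE x in lborel. norm (indicator {-1..1} x *\<^sub>R (f x * g x)) \<le> norm (indicator {-1..1::real} x *\<^sub>R ((f x)^2 + (g x)^2))"
  proof (intro AE_I2)
    fix x :: real
    have "\<bar>f x * g x\<bar> \<le> (f x)^2 + (g x)^2"
    proof -
      have "0 \<le> (\<bar>f x\<bar> - \<bar>g x\<bar>)^2" by simp
      hence "2 * (\<bar>f x\<bar> * \<bar>g x\<bar>) \<le> (f x)^2 + (g x)^2"
        by (simp add: power2_eq_square algebra_simps)
      moreover have "0 \<le> \<bar>f x\<bar> * \<bar>g x\<bar>" by simp
      ultimately show ?thesis by (simp only: abs_mult)
    qed
    hence h: "\<bar>f x * g x\<bar> \<le> \<bar>(f x)^2 + (g x)^2\<bar>" by (rule order_trans[OF _ abs_ge_self])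
    show "norm (indicator {-1..1} x *\<^sub>R (f x * g x)) \<le> norm (indicator {-1..1::real} x *\<^sub>R ((f x)^2 + (g x)^2))"
    proof (cases "x \<in> {-1..1}")
      case True thus ?thesis using h by (simp only: indicator_simps scaleR_one real_norm_def)
    next
      case False thus ?thesis by simp
    qed
  qed
qed

lemma L2_diff:
  assumes f: "in_L2 f" and g: "in_L2 g"
  shows "in_L2 (\<lambda>t. f t - g t)"
  unfolding in_L2_def
proof
  have "(\<lambda>x. indicator {-1..1} x *\<^sub>R f x - indicator {-1..1} x *\<^sub>R g x) \<in> borel_measurable lborel"
    using f g unfolding in_L2_def set_borel_measurable_def by (intro borel_measurable_diff) simp_all
  moreover have "(\<lambda>x. indicator {-1..1} x *\<^sub>R f x - indicator {-1..1} x *\<^sub>R g x) = (\<lambda>x. indicator {-1..1} x *\<^sub>R (f x - g x) :: real)"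
    by (auto simp: indicator_def)
  ultimately show "set_borel_measurable lborel {-1..1} (\<lambda>t. f t - g t)"
    unfolding set_borel_measurable_def by simp
  have "set_integrable lborel {-1..1} (\<lambda>t. ((f t)^2 + (g t)^2) - 2 * (f t * g t))"
    using f g L2_prod[OF f g] unfolding in_L2_def by (intro set_integral_diff(1) set_integral_add(1)) auto
  moreover have "(\<lambda>t. ((f t)^2 + (g t)^2) - 2 * (f t * g t)) = (\<lambda>t. (f t - g t)\<^sup>2)"
    by (auto simp: power2_diff)
  ultimately show "set_integrable lborel {-1..1} (\<lambda>t. (f t - g t)\<^sup>2)" by simp
qed

lemma pow_integral:
  fixes c d :: real
  assumes "c \<le> d"
  shows "integral\<^sup>L lborel (\<lambda>t. indicator {c..d} t *\<^sub>R t^k) = d^Suc k / Suc k - c^Suc k / Suc k"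
proof (intro integral_FTC_atLeastAtMost)
  fix t :: real
  have "((\<lambda>t. t^Suc k / real (Suc k)) has_real_derivative (real (Suc k) * t^(Suc k - Suc 0)) / real (Suc k)) (at t)"
    by (intro DERIV_cdivide DERIV_pow)
  moreover have "(real (Suc k) * t^(Suc k - Suc 0)) / real (Suc k) = t^k"
    by (simp del: of_nat_Suc)
  ultimately have "((\<lambda>t. t^Suc k / real (Suc k)) has_real_derivative t^k) (at t)"
    by metis
  hence "((\<lambda>t. t^Suc k / real (Suc k)) has_real_derivative t^k) (at t within {c..d})"
    by (rule has_field_derivative_at_within)
  thus "((\<lambda>t. t^Suc k / real (Suc k)) has_vector_derivative t^k) (at t within {c..d})"
    by (simp add: has_real_derivative_iff_has_vector_derivative)
next
  show "c \<le> d" by (rule assms)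
next
  show "continuous_on {c..d} (\<lambda>t. t^k)" by (intro continuous_intros)
qed

definition mom :: "nat \<Rightarrow> real" where "mom j = (if even j then 2 / (real j + 1) else 0)"

lemma moment: "(LINT t:{-1..1}|lborel. t^j) = mom j"
proof -
  have "(LINT t:{-1..1}|lborel. t^j) = 1^Suc j / Suc j - (-1)^Suc j / Suc j"
    unfolding set_lebesgue_integral_def by (rule pow_integral) simp
  also have "\<dots> = (1 - (-1)^Suc j) / (real j + 1)"
    by (simp add: add_divide_distrib add.commute)
  also have "\<dots> = mom j"
    by (auto simp: mom_def minus_one_power_iff)
  finally show ?thesis .
qed



definition gfun :: "nat \<Rightarrow> real \<Rightarrow> real" where
  "gfun k a = (1 - a^Suc k)/real (Suc k) - (4 - 9*a + 5*a^3)/8 * mom k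
      - 3/4*(1 - a^2) * mom (k+1) - 15/8*(a - a^3) * mom (k+2)"

lemma alg_even1:
  fixes n P a :: real
  assumes "n \<ge> 0"
  shows "(1 - a*P)/(n+1) - (4 - 9*a + 5*a^3)/8 * (2/(n+1)) - 15/8*(a - a^3)*(2/(n+3))
     = a*(-4*(n+3)*P + 12 - 6*n + 10*n*a^2)/(4*(n+1)*(n+3))"
proof -
  have h: "n+1 > 0" "n+3>0" using assms by auto
  show ?thesis using h by (simp add: divide_simps) (simp add: algebra_simps power2_eq_square power3_eq_cube)
qed

lemma gfun_even:
  fixes a :: real
  assumes "even k"
  shows "gfun k a = a * (- 4 * (real k + 3) * a^k + 12 - 6 * real k + 10 * real k * a^2)
            / (4 * (real k + 1) * (real k + 3))"
proof -
  have m: "mom k = 2 / (real k + 1)" "mom (k+1) = 0" "mom (k+2) = 2 / (real k + 3)"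
    using assms by (auto simp: mom_def)
  have "gfun k a = (1 - a * a^k)/(real k + 1) - (4 - 9*a + 5*a^3)/8 * (2 / (real k + 1))
      - 15/8*(a - a^3) * (2 / (real k + 3))"
    unfolding gfun_def m by (simp add: add.commute)
  also have "\<dots> = a * (- 4 * (real k + 3) * a^k + 12 - 6 * real k + 10 * real k * a^2)
            / (4 * (real k + 1) * (real k + 3))"
    by (rule alg_even1) simp
  finally show ?thesis .
qed

lemma gfun_odd:
  fixes a :: real
  assumes "odd k"
  shows "gfun k a = (1 - a^Suc k)/(real k + 1) - 3/2*(1 - a^2) / (real k + 2)"
proof -
  have m: "mom k = 0" "mom (k+1) = 2 / (real k + 2)" "mom (k+2) = 0"
    using assms by (auto simp: mom_def)
  have h: "real k + 2 > 0" by simp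
  have "3/4*(1 - a^2) * (2 / (real k + 2)) = 3/2*(1 - a^2) / (real k + 2)"
    using h by (simp add: divide_simps) (simp add: algebra_simps)
  thus ?thesis unfolding gfun_def m by (simp add: add.commute)
qed

lemma gfun_le:
  fixes a :: real
  assumes a0: "0 \<le> a" and a2: "a^2 \<le> 1/5"
  shows "gfun k a \<le> 0" and "k < 3 \<Longrightarrow> gfun k a = 0"
proof -
  have "gfun k a \<le> 0 \<and> (k < 3 \<longrightarrow> gfun k a = 0)"
  proof (cases "even k")
    case True
    note g = gfun_even[OF True, of a]
    show ?thesis
    proof (cases "k < 3")
      case True
      with \<open>even k\<close> have "k = 0 \<or> k = 2" by presburger
      thus ?thesis unfolding g by (auto simp: power2_eq_square)
    next
      case False
      hence "k \<ge> 4" using \<open>even k\<close> by presburger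
      hence k4: "real k \<ge> 4" by simp
      have "0 \<le> a^k" using a0 by simp
      hence t1: "- 4 * (real k + 3) * a^k \<le> 0"
        by (intro mult_nonpos_nonneg) auto
      have t2: "10 * real k * a^2 \<le> 10 * real k * (1/5)"
        using a2 by (intro mult_left_mono) auto
      have "- 4 * (real k + 3) * a^k + 12 - 6 * real k + 10 * real k * a^2 \<le> 12 - 6 * real k + 10 * real k * (1/5)"
        using t1 t2 by linarith
      also have "\<dots> < 0" using k4 by simp
      finally have "a * (- 4 * (real k + 3) * a^k + 12 - 6 * real k + 10 * real k * a^2) \<le> 0"
        using a0 by (simp add: mult_nonneg_nonpos)
      hence "gfun k a \<le> 0" unfolding g by (intro divide_nonpos_pos) auto
      thus ?thesis using False by simp
    qed
  next
    case False
    then obtain j where kj: "k = 2*j + 1" by (metis oddE)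
    define x where "x = a^2"
    have x0: "0 \<le> x" and x5: "x \<le> 1/5" using a2 by (auto simp: x_def)
    have sk: "Suc k = 2*(j+1)" using kj by simp
    have ak: "a^Suc k = x^(j+1)" unfolding x_def sk by (rule power_mult)
    have g: "gfun k a = (1 - x^(j+1))/(2*real j + 2) - 3/2*(1 - x) / (2 * real j + 3)"
    proof -
      have "gfun k a = (1 - a^Suc k)/(real k + 1) - 3/2*(1 - a^2) / (real k + 2)"
        by (rule gfun_odd[OF False])
      also have "\<dots> = (1 - x^(j+1))/(real k + 1) - 3/2*(1 - x) / (real k + 2)"
        unfolding ak x_def by simp
      also have "\<dots> = (1 - x^(j+1))/(2*real j + 2) - 3/2*(1 - x) / (2 * real j + 3)"
        unfolding kj by (simp add: add.commute)
      finally show ?thesis .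
    qed
    consider "j = 0" | "j = 1" | "j \<ge> 2" by linarith
    thus ?thesis
    proof cases
      case 1
      have "gfun k a = 0" unfolding g using 1 by simp
      thus ?thesis by simp
    next
      case 2
      have "gfun k a = (1 - x) * (5*x - 1) / 20" unfolding g 2
        by (simp add: field_simps power2_eq_square)
      also have "\<dots> \<le> 0" using x5 by (intro divide_nonpos_pos mult_nonneg_nonpos) auto
      finally show ?thesis using 2 kj by simp
    next
      case 3
      have j2: "real j \<ge> 2" using 3 by simp
      have "(1 - x^(j+1))/(2*real j + 2) \<le> 1/(2*real j + 2)"
        using x0 by (intro divide_right_mono) auto
      also have "\<dots> \<le> 6/5 / (2 * real j + 3)" using j2 by (simp add: field_simps)
      also have "\<dots> \<le> 3/2*(1 - x) / (2 * real j + 3)"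
        using x5 by (intro divide_right_mono) auto
      finally have "gfun k a \<le> 0" unfolding g by simp
      thus ?thesis using 3 kj by simp
    qed
  qed
  thus "gfun k a \<le> 0" and "k < 3 \<Longrightarrow> gfun k a = 0" by auto
qed



lemma fubini_cdf:
  fixes M :: "real measure"
  assumes fm: "finite_measure M" and Ms: "sets M = sets borel"
    and AE: "AE a in M. a \<in> {-1..1}"
  shows "(LINT t:{-1..1}|lborel. measure M {..t} * t^k) = (\<integral>a. (1 - a^(Suc k))/(Suc k) \<partial>M)"
proof -
  interpret finite_measure M by (rule fm)
  interpret P: pair_sigma_finite M lborel by unfold_locales
  have spM: "space M = UNIV" using sets_eq_imp_space_eq[OF Ms] by simp
  define f where "f a t = indicator {-1..1} t * t^k * indicator {..t} a" for a t :: real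
  have meas: "case_prod f \<in> borel_measurable (M \<Otimes>\<^sub>M lborel)"
  proof -
    have "sets (M \<Otimes>\<^sub>M lborel) = sets (borel \<Otimes>\<^sub>M borel)"
      using Ms by (intro sets_pair_measure_cong) auto
    hence e: "borel_measurable (M \<Otimes>\<^sub>M lborel) = borel_measurable (borel \<Otimes>\<^sub>M borel)"
      by (rule measurable_cong_sets) auto
    have s: "{x::real\<times>real. fst x \<le> snd x} \<in> sets (borel \<Otimes>\<^sub>M borel)"
      unfolding borel_prod by (intro borel_closed closed_Collect_le continuous_intros)
    have m1: "(\<lambda>x. indicator {-1..1} (snd x) * (snd x)^k * indicator {x::real\<times>real. fst x \<le> snd x} x :: real) \<in> borel_measurable (borel \<Otimes>\<^sub>M borel)"
      using s by measurable
    have m2: "case_prod f = (\<lambda>x. indicator {-1..1} (snd x) * (snd x)^k * indicator {x::real\<times>real. fst x \<le> snd x} x :: real)"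
      by (auto simp: indicator_def f_def)
    show ?thesis unfolding e m2 by (rule m1)
  qed
  have int: "integrable (M \<Otimes>\<^sub>M lborel) (case_prod f)"
  proof (rule Bochner_Integration.integrable_bound[OF integrable_real_indicator[of "space M \<times> {-1..1::real}"] meas])
    show "space M \<times> {-1..1::real} \<in> sets (M \<Otimes>\<^sub>M lborel)" by (intro pair_measureI) (auto simp: atLeastAtMost_borel)
    have "emeasure (M \<Otimes>\<^sub>M lborel) (space M \<times> {-1..1::real}) = emeasure M (space M) * emeasure lborel {-1..1::real}"
      by (intro sigma_finite_measure.emeasure_pair_measure_Times) (auto simp: lborel.sigma_finite_measure_axioms)
    also have "\<dots> < \<infinity>" by (simp add: ennreal_mult_eq_top_iff top.not_eq_extremum[symmetric])
    finally show "emeasure (M \<Otimes>\<^sub>M lborel) (space M \<times> {-1..1::real}) < \<infinity>" .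
    show "AE x in M \<Otimes>\<^sub>M lborel. norm (case_prod f x) \<le> norm (indicat_real (space M \<times> {-1..1::real}) x)"
    proof (intro AE_I2)
      fix x :: "real \<times> real"
      obtain a t where x: "x = (a, t)" by fastforce
      show "norm (case_prod f x) \<le> norm (indicat_real (space M \<times> {-1..1::real}) x)"
      proof (cases "t \<in> {-1..1}")
        case True
        hence "\<bar>t\<bar> ^ k \<le> 1" by (intro power_le_one) auto
        thus ?thesis using True by (auto simp: x f_def indicator_def spM power_abs)
      qed (auto simp: x f_def indicator_def)
    qed
  qed
  have "(\<integral>t. (\<integral>a. f a t \<partial>M) \<partial>lborel) = (\<integral>a. (\<integral>t. f a t \<partial>lborel) \<partial>M)"
    using P.Fubini_integral[OF int] .
  also have "(\<lambda>t. (\<integral>a. f a t \<partial>M)) = (\<lambda>t. indicator {-1..1} t * (measure M {..t} * t^k))"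
    by (auto simp: f_def spM)
  also have "(\<integral>a. (\<integral>t. f a t \<partial>lborel) \<partial>M) = (\<integral>a. (1 - a^(Suc k))/(Suc k) \<partial>M)"
  proof (rule integral_cong_AE)
    show "(\<lambda>a. \<integral>t. f a t \<partial>lborel) \<in> borel_measurable M"
      by (rule lborel.borel_measurable_lebesgue_integral[OF meas])
    show "(\<lambda>a. (1 - a ^ Suc k) / real (Suc k)) \<in> borel_measurable M"
      using Ms by (simp add: measurable_cong_sets[OF Ms refl])
    show "AE a in M. (\<integral>t. f a t \<partial>lborel) = (1 - a ^ Suc k) / real (Suc k)"
      using AE
    proof (rule AE_mp, intro AE_I2 impI)
      fix a :: real assume a: "a \<in> {-1..1}"
      have "(\<lambda>t. f a t) = (\<lambda>t. indicator {a..1} t *\<^sub>R t^k)"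
        using a by (auto simp: f_def indicator_def)
      hence "(\<integral>t. f a t \<partial>lborel) = integral\<^sup>L lborel (\<lambda>t. indicator {a..1} t *\<^sub>R t^k)" by simp
      also have "\<dots> = 1^(Suc k)/(Suc k) - a^(Suc k)/(Suc k)"
      proof (intro integral_FTC_atLeastAtMost)
        fix t :: real
        have "((\<lambda>t. t^Suc k / real (Suc k)) has_real_derivative (real (Suc k) * t^(Suc k - Suc 0)) / real (Suc k)) (at t)"
          by (intro DERIV_cdivide DERIV_pow)
        moreover have "(real (Suc k) * t^(Suc k - Suc 0)) / real (Suc k) = t^k"
          by (simp del: of_nat_Suc)
        ultimately have "((\<lambda>t. t^Suc k / real (Suc k)) has_real_derivative t^k) (at t)"
          by metis
        hence "((\<lambda>t. t^Suc k / real (Suc k)) has_real_derivative t^k) (at t within {a..1})"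
          by (rule has_field_derivative_at_within)
        thus "((\<lambda>t. t^Suc k / real (Suc k)) has_vector_derivative t^k) (at t within {a..1})"
          by (simp add: has_real_derivative_iff_has_vector_derivative)
      next
        show "a \<le> 1" using a by simp
      next
        show "continuous_on {a..1} (\<lambda>t. t^k)" by (intro continuous_intros)
      qed
      finally show "(\<integral>t. f a t \<partial>lborel) = (1 - a ^ Suc k) / real (Suc k)" by (simp add: diff_divide_distrib)
    qed
  qed
  finally show ?thesis by (simp add: set_lebesgue_integral_def)
qed


lemma set_int_nonpos:
  fixes f :: "'a \<Rightarrow> real"
  assumes "\<And>x. x \<in> A \<Longrightarrow> f x \<le> 0"
  shows "(LINT x:A|M. f x) \<le> 0"
proof -
  have "0 \<le> (LINT x:A|M. - f x)" by (rule set_int_nonneg) (use assms in auto)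
  thus ?thesis by (simp add: set_lebesgue_integral_def)
qed

lemma sq_ineq:
  fixes x y d :: real
  assumes d: "d > 0"
  shows "(x + y)^2 \<le> (1 + d) * x^2 + (1 + 1/d) * y^2"
proof -
  have "(1 + d) * x^2 + (1 + 1/d) * y^2 - (x + y)^2 = (d*x - y)^2 / d"
    using d by (simp add: divide_simps) (simp add: algebra_simps power2_eq_square)
  moreover have "0 \<le> (d*x - y)^2 / d" using d by simp
  ultimately show ?thesis by linarith
qed

lemma sqrt5_facts: "2 < sqrt (5::real)" "1 / sqrt 5 \<le> (1/2::real)" "(1 / sqrt 5)^2 = (1/5::real)"
proof -
  show s: "2 < sqrt (5::real)" by (rule real_less_rsqrt) simp
  thus "1 / sqrt 5 \<le> (1/2::real)" by (simp add: divide_simps)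
  show "(1 / sqrt 5)^2 = (1/5::real)" by (simp add: power_divide)
qed



theorem corollary1p12:
  fixes \<phi> :: "real \<Rightarrow> real" and M :: "real measure"
  assumes nonneg: "\<forall>t\<in>{-1..1}. \<phi> t \<ge> 0"
    and mono: "mono_on {-1..1} \<phi>"
    and rcont: "\<forall>t\<in>{-1..1}. continuous (at t within {t..1}) \<phi>"
    and zero: "\<forall>t\<in>{-1..<0}. \<phi> t = 0"
    and const: "\<forall>t\<in>{1 / sqrt 5..1}. \<phi> t = \<phi> 1"
    and M_sets: "sets M = sets borel"
    and M_cdf: "\<forall>t\<in>{-1..1}. emeasure M {-1..t} = ennreal (\<phi> t)"
    and M_supp: "emeasure M (UNIV - {-1..1}) = 0"
  shows "is_metric_projection A_plus \<phi>
     (\<lambda>t. (LINT a:{0..1 / sqrt 5}|M. (4 - 9 * a + 5 * a ^ 3) / 8)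
        + (LINT a:{0..1 / sqrt 5}|M. 3 / 4 * (1 - a\<^sup>2)) * t
        + (LINT a:{0..1 / sqrt 5}|M. 15 / 8 * (a - a ^ 3)) * t\<^sup>2)"
proof -
  define S where "S = {0..1 / sqrt 5::real}"
  note s5 = sqrt5_facts
  have Sprop: "0 \<le> a \<and> a \<le> 1/2 \<and> a^2 \<le> 1/5 \<and> a \<in> {-1..1}" if "a \<in> S" for a
  proof -
    have a: "0 \<le> a" "a \<le> 1 / sqrt 5" using that by (auto simp: S_def)
    have "a^2 \<le> (1 / sqrt 5)^2" using a by (intro power_mono) auto
    moreover have "a \<le> 1/2" using a(2) s5(2) by linarith
    ultimately show ?thesis using a s5(3) by auto
  qed
  have S_sets: "S \<in> sets borel" by (simp add: S_def)
  have spM: "space M = UNIV" using sets_eq_imp_space_eq[OF M_sets] by simp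
  have setsM: "A \<in> sets M \<longleftrightarrow> A \<in> sets borel" for A using M_sets by simp
  have Mtot: "emeasure M UNIV = ennreal (\<phi> 1)"
  proof -
    have "emeasure M UNIV = emeasure M ({-1..1} \<union> (UNIV - {-1..1}))" by simp
    also have "\<dots> = emeasure M {-1..1} + emeasure M (UNIV - {-1..1})"
      by (rule plus_emeasure[symmetric]) (auto simp: setsM)
    also have "\<dots> = ennreal (\<phi> 1)" using M_cdf M_supp by simp
    finally show ?thesis .
  qed
  have fm: "finite_measure M" by (rule finite_measureI) (simp add: spM Mtot)
  interpret finite_measure M by (rule fm)
  have null1: "UNIV - {-1..1} \<in> null_sets M" using M_supp by (intro null_setsI) (auto simp: setsM)
  have null2: "{-1..<0} \<in> null_sets M"
  proof -
    have eq: "{-1..<0::real} = (\<Union>n. {-1..-1/real (Suc n)})"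
    proof
      show "(\<Union>n. {-1..-1/real (Suc n)}) \<subseteq> {-1..<0::real}"
      proof (intro UN_least subsetI)
        fix n x assume x: "x \<in> {-1..-1/real (Suc n)}"
        hence x1: "-1 \<le> x" "x \<le> -1/real (Suc n)" by (simp_all only: atLeastAtMost_iff)
        have "-1/real (Suc n) < 0" by simp
        thus "x \<in> {-1..<0}" using x1 unfolding atLeastLessThan_iff by linarith
      qed
      show "{-1..<0::real} \<subseteq> (\<Union>n. {-1..-1/real (Suc n)})"
      proof
        fix x :: real assume x: "x \<in> {-1..<0}"
        then obtain n where n: "inverse (real (Suc n)) < - x" using reals_Archimedean[of "-x"] by auto
        hence "x \<le> -1/real (Suc n)" by (simp add: divide_inverse)
        thus "x \<in> (\<Union>n. {-1..-1/real (Suc n)})" using x by auto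
      qed
    qed
    have "emeasure M (\<Union>n. {-1..-1/real (Suc n)}) = 0"
    proof (rule emeasure_UN_eq_0)
      fix n
      have "-1/real (Suc n) \<in> {-1..1}" "-1/real (Suc n) \<in> {-1..<0}" by (auto simp: divide_simps)
      thus "emeasure M {-1..-1/real (Suc n)} = 0" using M_cdf zero by simp
    qed (auto simp: setsM)
    thus ?thesis unfolding eq by (intro null_setsI) (auto simp: setsM)
  qed
  have null3: "{1 / sqrt 5<..1} \<in> null_sets M"
  proof -
    have p: "0 < 1 / sqrt (5::real)" by simp
    have ge: "-1 \<le> 1 / sqrt (5::real)" "1 / sqrt (5::real) \<le> 1" using p s5(2) by linarith+
    have eq: "{1 / sqrt 5<..1} = {-1..1} - {-1..1 / sqrt (5::real)}" using ge by auto
    have "emeasure M ({-1..1} - {-1..1 / sqrt 5}) = emeasure M {-1..1} - emeasure M {-1..1 / sqrt 5}"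
    proof (rule emeasure_Diff)
      have "1 / sqrt 5 \<in> {-1..1::real}" using ge by simp
      hence "emeasure M {-1..1 / sqrt 5} = ennreal (\<phi> (1 / sqrt 5))" using M_cdf by blast
      thus "emeasure M {-1..1 / sqrt 5} \<noteq> \<infinity>" by simp
      show "{-1..1} \<in> sets M" "{-1..1 / sqrt 5} \<in> sets M" by (simp_all add: setsM)
      show "{-1..1 / sqrt 5} \<subseteq> {-1..1::real}" using ge by simp
    qed
    also have "\<dots> = 0"
    proof -
      have "1 / sqrt 5 \<in> {-1..1::real}" using ge by simp
      hence "emeasure M {-1..1 / sqrt 5} = ennreal (\<phi> (1 / sqrt 5))" using M_cdf by blast
      moreover have "1 / sqrt 5 \<in> {1 / sqrt 5..1::real}" using ge by simp
      hence "\<phi> (1 / sqrt 5) = \<phi> 1" using const by blast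
      moreover have "emeasure M {-1..1} = ennreal (\<phi> 1)" using M_cdf by simp
      ultimately show ?thesis by simp
    qed
    finally show ?thesis unfolding eq by (intro null_setsI) (auto simp: setsM)
  qed
  have AES: "AE a in M. a \<in> S"
  proof (rule AE_I')
    show "(UNIV - {-1..1}) \<union> {-1..<0} \<union> {1 / sqrt 5<..1} \<in> null_sets M"
      using null1 null2 null3 by (intro null_sets.Un) auto
    show "{x \<in> space M. x \<notin> S} \<subseteq> (UNIV - {-1..1}) \<union> {-1..<0} \<union> {1 / sqrt 5<..1}"
      by (auto simp: S_def)
  qed
  have AE1: "AE a in M. a \<in> {-1..1}" using AES by eventually_elim (use Sprop in auto)
  have phi_meas: "\<phi> t = measure M {..t}" if t: "t \<in> {-1..1}" for t
  proof -
    have z: "emeasure M {..<-1} = 0"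
    proof -
      have "emeasure M {..<-1} \<le> emeasure M (UNIV - {-1..1})" by (intro emeasure_mono) (auto simp: setsM)
      thus ?thesis using M_supp by simp
    qed
    have "emeasure M {..t} = emeasure M ({-1..t} \<union> {..<-1})"
      using t by (intro arg_cong[where f="emeasure M"]) auto
    also have "\<dots> = emeasure M {-1..t} + emeasure M {..<-1}"
      by (rule plus_emeasure[symmetric]) (auto simp: setsM)
    also have "\<dots> = ennreal (\<phi> t)" using z M_cdf t by simp
    finally show ?thesis using nonneg t by (simp add: measure_def)
  qed
  have Mcong: "measurable M borel = measurable borel (borel :: real measure)"
    by (rule measurable_cong_sets[OF M_sets refl])
  have int_S: "set_integrable M S g" if g: "continuous_on S g" for g :: "real \<Rightarrow> real"
  proof -
    have "compact S" by (simp add: S_def)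
    hence "bounded (g ` S)" by (intro compact_imp_bounded compact_continuous_image g)
    then obtain B where B: "\<forall>x\<in>S. \<bar>g x\<bar> \<le> B" by (auto simp: bounded_real)
    show ?thesis unfolding set_integrable_def
    proof (rule integrable_const_bound[where B="\<bar>B\<bar>"])
      show "AE x in M. norm (indicator S x *\<^sub>R g x) \<le> \<bar>B\<bar>"
        using B by (intro AE_I2) (auto simp: indicator_def)
      show "(\<lambda>x. indicator S x *\<^sub>R g x) \<in> borel_measurable M"
        unfolding Mcong by (rule borel_measurable_continuous_on_indicator[OF S_sets g])
    qed
  qed
  have IMconv: "(\<integral>a. g a \<partial>M) = (LINT a:S|M. g a)" if g: "continuous_on UNIV g" for g :: "real \<Rightarrow> real"
    unfolding set_lebesgue_integral_def
  proof (rule integral_cong_AE)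
    show "g \<in> borel_measurable M" unfolding Mcong by (rule borel_measurable_continuous_onI[OF g])
    show "(\<lambda>x. indicator S x *\<^sub>R g x) \<in> borel_measurable M" unfolding Mcong
      by (rule borel_measurable_continuous_on_indicator[OF S_sets]) (intro continuous_on_subset[OF g]; simp)
    show "AE x in M. g x = indicator S x *\<^sub>R g x" using AES by eventually_elim simp
  qed
  have fub: "(LINT t:{-1..1}|lborel. \<phi> t * t^k) = (LINT a:S|M. (1 - a^Suc k)/real (Suc k))" for k
  proof -
    have "(LINT t:{-1..1}|lborel. \<phi> t * t^k) = (LINT t:{-1..1}|lborel. measure M {..t} * t^k)"
      by (rule set_lebesgue_integral_cong) (auto simp: phi_meas)
    also have "\<dots> = (\<integral>a. (1 - a^(Suc k))/(Suc k) \<partial>M)"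
      by (rule fubini_cdf[OF fm M_sets AE1])
    also have "\<dots> = (LINT a:S|M. (1 - a^Suc k)/real (Suc k))"
      by (rule IMconv) (intro continuous_intros ballI, simp del: of_nat_Suc)
    finally show ?thesis .
  qed
  define A0 where "A0 = (LINT a:S|M. (4 - 9 * a + 5 * a ^ 3) / 8)"
  define B0 where "B0 = (LINT a:S|M. 3 / 4 * (1 - a\<^sup>2))"
  define C0 where "C0 = (LINT a:S|M. 15 / 8 * (a - a ^ 3))"
  define p where "p = (\<lambda>t::real. A0 + B0 * t + C0 * t\<^sup>2)"
  define pc where "pc k = (if k = 0 then A0 else if k = 1 then B0 else if k = 2 then C0 else 0)" for k :: nat
  have A0nn: "0 \<le> A0" unfolding A0_def
  proof (rule set_int_nonneg)
    fix a assume "a \<in> S"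
    note h = Sprop[OF this]
    have "0 \<le> (1 - a) * (4 - 5*a - 5*a^2)" using h by (intro mult_nonneg_nonneg) auto
    also have "(1 - a) * (4 - 5*a - 5*a^2) = 4 - 9 * a + 5 * a ^ 3"
      by (simp add: algebra_simps power2_eq_square power3_eq_cube)
    finally show "0 \<le> (4 - 9 * a + 5 * a ^ 3) / 8" by simp
  qed
  have B0nn: "0 \<le> B0" unfolding B0_def
  proof (rule set_int_nonneg)
    fix a assume "a \<in> S"
    hence "a^2 \<le> 1/5" using Sprop by blast
    thus "0 \<le> 3 / 4 * (1 - a\<^sup>2)" by simp
  qed
  have C0nn: "0 \<le> C0" unfolding C0_def
  proof (rule set_int_nonneg)
    fix a assume "a \<in> S"
    note h = Sprop[OF this]
    have "0 \<le> a * (1 - a^2)" using h by (intro mult_nonneg_nonneg) auto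
    also have "a * (1 - a^2) = a - a^3" by (simp add: algebra_simps power2_eq_square power3_eq_cube)
    finally show "0 \<le> 15 / 8 * (a - a ^ 3)" by simp
  qed
  have pc_nn: "0 \<le> pc k" for k using A0nn B0nn C0nn by (simp add: pc_def)
  have p_sum: "(\<Sum>k<K. pc k * t^k) = p t" if K: "3 \<le> K" for K t
  proof -
    have "(\<Sum>k<K. pc k * t^k) = (\<Sum>k<3. pc k * t^k)"
      using K by (intro sum.mono_neutral_right) (auto simp: pc_def)
    also have "\<dots> = p t" by (simp add: numeral_3_eq_3 pc_def p_def power2_eq_square)
    finally show ?thesis .
  qed
  have cont_L2: "in_L2 g" if "continuous_on UNIV g" for g :: "real \<Rightarrow> real"
    by (rule L2_cont) (rule continuous_on_subset[OF that], simp)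
  have L2p: "in_L2 p" unfolding p_def by (intro cont_L2 continuous_intros)
  have L2pow: "in_L2 (\<lambda>t. t^k)" for k by (intro cont_L2 continuous_intros)
  have L2phi: "in_L2 \<phi>"
  proof (rule L2_bounded)
    have mm: "(\<lambda>t. measure M {..t}) \<in> borel_measurable borel"
      by (rule borel_measurable_mono) (auto simp: mono_def setsM intro!: finite_measure_mono)
    have "(\<lambda>x. indicator {-1..1} x * measure M {..x}) \<in> borel_measurable borel"
      by (intro borel_measurable_times mm borel_measurable_indicator) simp
    moreover have "(\<lambda>x. indicator {-1..1} x * measure M {..x}) = (\<lambda>x. indicator {-1..1} x *\<^sub>R \<phi> x)"
      by (auto simp: indicator_def phi_meas)
    ultimately show "set_borel_measurable lborel {-1..1} \<phi>"
      unfolding set_borel_measurable_def by simp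
    show "\<forall>t\<in>{-1..1}. \<bar>\<phi> t\<bar> \<le> \<phi> 1"
    proof
      fix t :: real assume t: "t \<in> {-1..1}"
      have "\<phi> t \<le> \<phi> 1" using t by (intro mono_onD[OF mono]) auto
      thus "\<bar>\<phi> t\<bar> \<le> \<phi> 1" using nonneg t by auto
    qed
  qed
  have int_pow: "set_integrable lborel {-1..1::real} (\<lambda>t. t^j)" for j
    unfolding set_integrable_def by (intro borel_integrable_compact continuous_intros) auto
  have Ip: "(LINT t:{-1..1}|lborel. p t * t^k) = A0 * mom k + B0 * mom (k+1) + C0 * mom (k+2)" for k
  proof -
    have "(LINT t:{-1..1}|lborel. p t * t^k) = (LINT t:{-1..1}|lborel. A0 * t^k + B0 * t^(k+1) + C0 * t^(k+2))"
      by (intro set_lebesgue_integral_cong) (auto simp: p_def algebra_simps power2_eq_square)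
    also have "\<dots> = (LINT t:{-1..1}|lborel. A0 * t^k + B0 * t^(k+1)) + (LINT t:{-1..1}|lborel. C0 * t^(k+2))"
      by (intro set_integral_add(2) set_integrable_mult_right int_pow set_integral_add(1))
    also have "(LINT t:{-1..1}|lborel. A0 * t^k + B0 * t^(k+1)) = (LINT t:{-1..1}|lborel. A0 * t^k) + (LINT t:{-1..1}|lborel. B0 * t^(k+1))"
      by (intro set_integral_add(2) set_integrable_mult_right int_pow)
    finally show ?thesis by (simp only: set_integral_mult_right moment)
  qed
  have Iu: "(LINT t:{-1..1}|lborel. (\<phi> t - p t) * t^k) = (LINT a:S|M. gfun k a)" for k
  proof -
    have i1: "set_integrable lborel {-1..1} (\<lambda>t. \<phi> t * t^k)" by (rule L2_prod[OF L2phi L2pow])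
    have i2: "set_integrable lborel {-1..1} (\<lambda>t. p t * t^k)" by (rule L2_prod[OF L2p L2pow])
    have "(LINT t:{-1..1}|lborel. (\<phi> t - p t) * t^k) = (LINT t:{-1..1}|lborel. \<phi> t * t^k - p t * t^k)"
      by (simp add: algebra_simps)
    also have "\<dots> = (LINT t:{-1..1}|lborel. \<phi> t * t^k) - (LINT t:{-1..1}|lborel. p t * t^k)"
      by (rule set_integral_diff(2)[OF i1 i2])
    also have "\<dots> = (LINT a:S|M. (1 - a^Suc k)/real (Suc k)) - (A0 * mom k + B0 * mom (k+1) + C0 * mom (k+2))"
      by (simp only: fub Ip)
    also have "\<dots> = (LINT a:S|M. gfun k a)"
    proof -
      have c1: "set_integrable M S (\<lambda>a. (1 - a^Suc k)/real (Suc k))"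
        by (rule int_S) (auto intro!: continuous_intros simp del: of_nat_Suc)
      have c2: "set_integrable M S (\<lambda>a. (4 - 9 * a + 5 * a ^ 3) / 8 * mom k)"
        by (rule int_S) (auto intro!: continuous_intros)
      have c3: "set_integrable M S (\<lambda>a. 3 / 4 * (1 - a\<^sup>2) * mom (k+1))"
        by (rule int_S) (auto intro!: continuous_intros)
      have c4: "set_integrable M S (\<lambda>a. 15 / 8 * (a - a ^ 3) * mom (k+2))"
        by (rule int_S) (auto intro!: continuous_intros)
      have "(LINT a:S|M. gfun k a) = (LINT a:S|M. (1 - a^Suc k)/real (Suc k) - (4 - 9 * a + 5 * a ^ 3) / 8 * mom k
          - 3 / 4 * (1 - a\<^sup>2) * mom (k+1) - 15 / 8 * (a - a ^ 3) * mom (k+2))"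
        by (simp add: gfun_def)
      also have "\<dots> = (LINT a:S|M. (1 - a^Suc k)/real (Suc k)) - (LINT a:S|M. (4 - 9 * a + 5 * a ^ 3) / 8 * mom k)
          - (LINT a:S|M. 3 / 4 * (1 - a\<^sup>2) * mom (k+1)) - (LINT a:S|M. 15 / 8 * (a - a ^ 3) * mom (k+2))"
        using c1 c2 c3 c4 by (simp add: set_integral_diff)
      also have "\<dots> = (LINT a:S|M. (1 - a^Suc k)/real (Suc k)) - (A0 * mom k + B0 * mom (k+1) + C0 * mom (k+2))"
        unfolding A0_def B0_def C0_def set_integral_mult_left by simp
      finally show ?thesis by simp
    qed
    finally show ?thesis .
  qed
  have S_setsM: "S \<in> sets M" using S_sets by (simp add: setsM)
  have Iu_le: "(LINT t:{-1..1}|lborel. (\<phi> t - p t) * t^k) \<le> 0" for k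
    unfolding Iu by (rule set_int_nonpos) (use Sprop gfun_le in auto)
  have Iu_0: "(LINT t:{-1..1}|lborel. (\<phi> t - p t) * t^k) = 0" if "k < 3" for k
  proof -
    have "(LINT a:S|M. gfun k a) = (LINT a:S|M. 0)"
      by (rule set_lebesgue_integral_cong[OF S_setsM]) (use Sprop gfun_le(2)[OF _ _ that] in auto)
    thus ?thesis unfolding Iu by (simp add: set_lebesgue_integral_def)
  qed
  define Dp where "Dp = (LINT t:{-1..1}|lborel. (\<phi> t - p t)\<^sup>2)"
  have L2u: "in_L2 (\<lambda>t. \<phi> t - p t)" by (rule L2_diff[OF L2phi L2p])
  have poly_ge: "Dp \<le> (LINT t:{-1..1}|lborel. (\<phi> t - (\<Sum>n<N. a n * t^n))\<^sup>2)"
    if a: "\<forall>n. 0 \<le> a n" for N a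
  proof -
    define K where "K = max N 3"
    define c where "c k = pc k - (if k < N then a k else 0)" for k
    define s where "s t = (\<Sum>n<N. a n * t^n)" for t :: real
    define W where "W t = (\<Sum>k<K. c k * t^k)" for t :: real
    have w: "p t - s t = W t" for t
    proof -
      have "W t = (\<Sum>k<K. pc k * t^k) - (\<Sum>k<K. (if k < N then a k else 0) * t^k)"
        unfolding W_def c_def by (simp add: sum_subtractf algebra_simps)
      also have "(\<Sum>k<K. pc k * t^k) = p t" by (rule p_sum) (simp add: K_def)
      also have "(\<Sum>k<K. (if k < N then a k else 0) * t^k) = (\<Sum>k<N. (if k < N then a k else 0) * t^k)"
        by (intro sum.mono_neutral_right) (auto simp: K_def)
      also have "\<dots> = s t" unfolding s_def by (intro sum.cong) auto
      finally show ?thesis by simp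
    qed
    have L2W: "in_L2 W" unfolding W_def by (intro cont_L2 continuous_intros)
    have L2s: "in_L2 s" unfolding s_def by (intro cont_L2 continuous_intros)
    have iuk: "set_integrable lborel {-1..1} (\<lambda>t. (\<phi> t - p t) * t^k)" for k
      by (rule L2_prod[OF L2u L2pow])
    have I_uw: "(LINT t:{-1..1}|lborel. (\<phi> t - p t) * W t) = (\<Sum>k<K. c k * (LINT t:{-1..1}|lborel. (\<phi> t - p t) * t^k))"
    proof -
      have "(\<lambda>t. indicator {-1..1} t *\<^sub>R ((\<phi> t - p t) * W t)) = (\<lambda>t. \<Sum>k<K. c k * (indicator {-1..1} t *\<^sub>R ((\<phi> t - p t) * t^k)))"
        by (auto simp: W_def sum_distrib_left mult_ac intro!: sum.cong)
      hence "(LINT t:{-1..1}|lborel. (\<phi> t - p t) * W t) = integral\<^sup>L lborel (\<lambda>t. \<Sum>k<K. c k * (indicator {-1..1} t *\<^sub>R ((\<phi> t - p t) * t^k)))"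
        by (simp add: set_lebesgue_integral_def)
      also have "\<dots> = (\<Sum>k<K. integral\<^sup>L lborel (\<lambda>t. c k * (indicator {-1..1} t *\<^sub>R ((\<phi> t - p t) * t^k))))"
        by (intro Bochner_Integration.integral_sum integrable_mult_right iuk[unfolded set_integrable_def])
      also have "\<dots> = (\<Sum>k<K. c k * (LINT t:{-1..1}|lborel. (\<phi> t - p t) * t^k))"
        by (simp add: set_lebesgue_integral_def)
      finally show ?thesis .
    qed
    have nn: "0 \<le> (\<Sum>k<K. c k * (LINT t:{-1..1}|lborel. (\<phi> t - p t) * t^k))"
    proof (intro sum_nonneg)
      fix k assume "k \<in> {..<K}"
      show "0 \<le> c k * (LINT t:{-1..1}|lborel. (\<phi> t - p t) * t^k)"
      proof (cases "k < 3")
        case True thus ?thesis using Iu_0[OF True] by simp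
      next
        case False
        hence "c k \<le> 0" using a by (simp add: c_def pc_def)
        thus ?thesis using Iu_le[of k] by (intro mult_nonpos_nonpos)
      qed
    qed
    have i3: "set_integrable lborel {-1..1} (\<lambda>t. (\<phi> t - p t)\<^sup>2 + 2 * ((\<phi> t - p t) * W t))"
      using L2u L2_prod[OF L2u L2W] unfolding in_L2_def by (intro set_integral_add(1) set_integrable_mult_right) auto
    have i4: "set_integrable lborel {-1..1} (\<lambda>t. (\<phi> t - s t)\<^sup>2)"
      using L2_diff[OF L2phi L2s] unfolding in_L2_def by auto
    have "Dp \<le> Dp + 2 * (LINT t:{-1..1}|lborel. (\<phi> t - p t) * W t)"
      using nn I_uw by simp
    also have "\<dots> = (LINT t:{-1..1}|lborel. (\<phi> t - p t)\<^sup>2 + 2 * ((\<phi> t - p t) * W t))"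
      unfolding Dp_def using L2u L2_prod[OF L2u L2W] unfolding in_L2_def
      by (subst set_integral_add(2)) auto
    also have "\<dots> \<le> (LINT t:{-1..1}|lborel. (\<phi> t - s t)\<^sup>2)"
    proof (rule set_integral_mono[OF i3 i4])
      fix t :: real
      have e: "\<phi> t - s t = (\<phi> t - p t) + W t" using w[of t] by linarith
      have "(\<phi> t - s t)\<^sup>2 = (\<phi> t - p t)\<^sup>2 + (W t)\<^sup>2 + 2 * (\<phi> t - p t) * W t"
        unfolding e by (rule power2_sum)
      moreover have "0 \<le> (W t)\<^sup>2" by simp
      moreover have "2 * (\<phi> t - p t) * W t = 2 * ((\<phi> t - p t) * W t)" by (rule mult.assoc)
      ultimately show "(\<phi> t - p t)\<^sup>2 + 2 * ((\<phi> t - p t) * W t) \<le> (\<phi> t - s t)\<^sup>2"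
        by linarith
    qed
    finally show ?thesis unfolding s_def .
  qed
  have main: "is_metric_projection A_plus \<phi> p"
    unfolding is_metric_projection_def
  proof (intro conjI ballI)
    show "p \<in> A_plus" unfolding A_plus_def
    proof (intro CollectI conjI exI[of _ pc] allI L2p pc_nn)
      have "eventually (\<lambda>N. L2dist p (\<lambda>t. \<Sum>n<N. pc n * t ^ n) = 0) sequentially"
        unfolding eventually_sequentially
      proof (intro exI[of _ 3] allI impI)
        fix N :: nat assume "3 \<le> N"
        hence "(\<lambda>t. \<Sum>n<N. pc n * t ^ n) = p" using p_sum by auto
        thus "L2dist p (\<lambda>t. \<Sum>n<N. pc n * t ^ n) = 0" by (simp add: L2dist_def set_lebesgue_integral_def)
      qed
      thus "(\<lambda>N. L2dist p (\<lambda>t. \<Sum>n<N. pc n * t ^ n)) \<longlonglongrightarrow> 0" by (rule tendsto_eventually)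
    qed
  next
    fix h assume "h \<in> A_plus"
    then obtain a where L2h: "in_L2 h" and a: "\<forall>n. 0 \<le> a n"
      and conv: "(\<lambda>N. L2dist h (\<lambda>t. \<Sum>n<N. a n * t ^ n)) \<longlonglongrightarrow> 0"
      unfolding A_plus_def by blast
    define s where "s N t = (\<Sum>n<N. a n * t^n)" for N and t :: real
    define d where "d N = (LINT t:{-1..1}|lborel. (h t - s N t)\<^sup>2)" for N
    define X where "X = (LINT t:{-1..1}|lborel. (\<phi> t - h t)\<^sup>2)"
    have L2s: "in_L2 (s N)" for N unfolding s_def by (intro cont_L2 continuous_intros)
    have d0: "0 \<le> d N" for N unfolding d_def by (rule set_int_nonneg) simp
    have X0: "0 \<le> X" unfolding X_def by (rule set_int_nonneg) simp
    have dconv: "d \<longlonglongrightarrow> 0"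
    proof -
      have "(\<lambda>N. (L2dist h (s N))^2) \<longlonglongrightarrow> 0^2"
        using conv unfolding s_def by (intro tendsto_power)
      moreover have "(L2dist h (s N))^2 = d N" for N
        unfolding L2dist_def d_def using d0[of N] unfolding d_def by simp
      ultimately show ?thesis by simp
    qed
    have bound: "Dp \<le> (1 + e) * X" if e: "e > 0" for e
    proof -
      have "Dp \<le> (1 + e) * X + (1 + 1/e) * d N" for N
      proof -
        have "Dp \<le> (LINT t:{-1..1}|lborel. (\<phi> t - s N t)\<^sup>2)"
          using poly_ge[OF a, of N] unfolding s_def .
        also have "\<dots> \<le> (LINT t:{-1..1}|lborel. (1 + e) * (\<phi> t - h t)\<^sup>2 + (1 + 1/e) * (h t - s N t)\<^sup>2)"
        proof (rule set_integral_mono)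
          show "set_integrable lborel {-1..1} (\<lambda>t. (\<phi> t - s N t)\<^sup>2)"
            using L2_diff[OF L2phi L2s] unfolding in_L2_def by auto
          show "set_integrable lborel {-1..1} (\<lambda>t. (1 + e) * (\<phi> t - h t)\<^sup>2 + (1 + 1/e) * (h t - s N t)\<^sup>2)"
            using L2_diff[OF L2phi L2h] L2_diff[OF L2h L2s] unfolding in_L2_def
            by (intro set_integral_add(1) set_integrable_mult_right) auto
          fix t :: real
          show "(\<phi> t - s N t)\<^sup>2 \<le> (1 + e) * (\<phi> t - h t)\<^sup>2 + (1 + 1/e) * (h t - s N t)\<^sup>2"
            using sq_ineq[OF e, of "\<phi> t - h t" "h t - s N t"] by simp
        qed
        also have "\<dots> = (1 + e) * X + (1 + 1/e) * d N"
          unfolding X_def d_def using L2_diff[OF L2phi L2h] L2_diff[OF L2h L2s] unfolding in_L2_def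
          by (subst set_integral_add(2)) auto
        finally show ?thesis .
      qed
      moreover have "(\<lambda>N. (1 + e) * X + (1 + 1/e) * d N) \<longlonglongrightarrow> (1 + e) * X + (1 + 1/e) * 0"
        by (intro tendsto_intros dconv)
      ultimately show ?thesis
        by (intro LIMSEQ_le_const[of "\<lambda>N. (1 + e) * X + (1 + 1/e) * d N"]) auto
    qed
    have "Dp \<le> X"
    proof (rule field_le_epsilon)
      fix e :: real assume e: "0 < e"
      have "Dp \<le> (1 + e / (X + 1)) * X" using bound[of "e / (X + 1)"] e X0 by simp
      also have "\<dots> = X + e * (X / (X + 1))" using X0 by (simp add: field_simps)
      also have "\<dots> \<le> X + e * 1"
        using X0 e by (intro add_left_mono mult_left_mono) auto
      finally show "Dp \<le> X + e" by simp
    qed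
    thus "L2dist \<phi> p \<le> L2dist \<phi> h" unfolding L2dist_def Dp_def X_def by simp
  qed
  show ?thesis using main unfolding p_def A0_def B0_def C0_def S_def .
qed

end
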